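(* Let $S$ be a surface, $\phi:S\to\mathbf{Ein}^{1,1}$ an immersion with $\phi^*\tau$ trivial, $g$ a Lorentz metric on $S$ compatible with the induced split structure, and $(u_t)_{t}$ a smooth family of functions on $S$ with $u_0=0$; set $u=\frac{\mathrm d}{\mathrm dt}\big|_{t=0}u_t$. Let $\sigma_t$ be the isotropic surface associated with $g_t=e^{2u_t}g$ (so that $\sigma_t=e^{u_t}\sigma_0$) and $\eta_t$ its dual isotropic surface; write $\sigma=\sigma_0,\eta=\eta_0$ and dots for $t$-derivatives at $t=0$. Then $$\dot\sigma=u\,\sigma,\qquad \dot\eta=-u\,\eta-\mathrm D_{\nabla^gu}\sigma,$$ where $\nabla^gu$ is the $g$-gradient of $u$, i.e. the vector field with $g(\nabla^gu,\cdot)=\mathrm du$.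
   Context: $W$ is a real $4$-dimensional vector space with a quadratic form of signature $(2,2)$ and polar form $\langle\cdot,\cdot\rangle$; $\mathbf{Ein}^{1,1}\subset\mathbf P(W)$ is the isotropic quadric with tautological line bundle $\tau$ and canonical split structure (fibers of the two projections under a Segre identification with $\mathbf{RP}^1\times\mathbf{RP}^1$). The isotropic surface associated with a compatible metric $h$ is the (unique up to sign) map $\sigma:S\to W$ with $\langle\sigma,\sigma\rangle=0$, $[\sigma]=\phi$, and $h(X,Y)=\langle\mathrm D_X\sigma,\mathrm D_Y\sigma\rangle$. Its dual isotropic surface is the map $\eta$ with $\langle\eta,\sigma\rangle=1$, $\langle\eta,\eta\rangle=0$, $\langle\eta,\mathrm D_X\sigma\rangle=0$ for all tangent $X$. *)

theory Defs
  imports "HOL-Analysis.Analysis"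
begin

text \<open>Local model: the surface S is (a coordinate patch) an open set U in real^2,
  tangent vectors are elements of real^2. W is real^4 with a symmetric bilinear
  form B of signature (2,2).\<close>

fun smooth_k :: "nat \<Rightarrow> 'a::euclidean_space set \<Rightarrow> ('a \<Rightarrow> 'b::real_normed_vector) \<Rightarrow> bool" where
  "smooth_k 0 U f = continuous_on U f"
| "smooth_k (Suc k) U f =
     (\<exists>f'. (\<forall>x\<in>U. (f has_derivative f' x) (at x)) \<and> (\<forall>v. smooth_k k U (\<lambda>x. f' x v)))"

definition smooth_on :: "'a::euclidean_space set \<Rightarrow> ('a \<Rightarrow> 'b::real_normed_vector) \<Rightarrow> bool" where
  "smooth_on U f \<longleftrightarrow> (\<forall>k. smooth_k k U f)"

definition Dd :: "('a::real_normed_vector \<Rightarrow> 'b::real_normed_vector) \<Rightarrow> 'a \<Rightarrow> 'a \<Rightarrow> 'b" where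
  "Dd f p X = frechet_derivative f (at p) X"

definition signature_22 :: "(real^4 \<Rightarrow> real^4 \<Rightarrow> real) \<Rightarrow> bool" where
  "signature_22 B \<longleftrightarrow> bilinear B \<and> (\<forall>x y. B x y = B y x) \<and>
     (\<exists>e::nat \<Rightarrow> real^4. inj_on e {..<4} \<and> independent (e ` {..<4}) \<and>
        (\<forall>i<4. \<forall>j<4. B (e i) (e j) = (if i = j then (if i < 2 then 1 else -1) else 0)))"

definition lorentz_form :: "(real^2 \<Rightarrow> real^2 \<Rightarrow> real) \<Rightarrow> bool" where
  "lorentz_form h \<longleftrightarrow> bilinear h \<and> (\<forall>x y. h x y = h y x) \<and>
     (\<exists>e1 e2. h e1 e1 = 1 \<and> h e2 e2 = -1 \<and> h e1 e2 = 0)"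

definition lorentz_metric :: "(real^2) set \<Rightarrow> (real^2 \<Rightarrow> real^2 \<Rightarrow> real^2 \<Rightarrow> real) \<Rightarrow> bool" where
  "lorentz_metric U g \<longleftrightarrow> (\<forall>p\<in>U. lorentz_form (g p)) \<and> (\<forall>X Y. smooth_on U (\<lambda>p. g p X Y))"

text \<open>sigma : U \<rightarrow> W is a smooth nowhere vanishing isotropic lift of an immersion
  phi = [sigma] : U \<rightarrow> Ein^{1,1} (the existence of such a global lift is exactly the
  triviality of phi^* tau). phi is an immersion iff D sigma X is never a multiple of
  sigma for X \<noteq> 0.\<close>
definition isotropic_lift_of_immersion ::
  "(real^4 \<Rightarrow> real^4 \<Rightarrow> real) \<Rightarrow> (real^2) set \<Rightarrow> (real^2 \<Rightarrow> real^4) \<Rightarrow> bool" where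
  "isotropic_lift_of_immersion B U \<sigma> \<longleftrightarrow> smooth_on U \<sigma> \<and>
     (\<forall>p\<in>U. \<sigma> p \<noteq> 0 \<and> B (\<sigma> p) (\<sigma> p) = 0 \<and>
        (\<forall>X. Dd \<sigma> p X \<in> span {\<sigma> p} \<longrightarrow> X = 0))"

definition isotropic_surface_of ::
  "(real^4 \<Rightarrow> real^4 \<Rightarrow> real) \<Rightarrow> (real^2) set \<Rightarrow> (real^2 \<Rightarrow> real^2 \<Rightarrow> real^2 \<Rightarrow> real)
     \<Rightarrow> (real^2 \<Rightarrow> real^4) \<Rightarrow> bool" where
  "isotropic_surface_of B U h \<sigma> \<longleftrightarrow> smooth_on U \<sigma> \<and>
     (\<forall>p\<in>U. B (\<sigma> p) (\<sigma> p) = 0 \<and> (\<forall>X Y. h p X Y = B (Dd \<sigma> p X) (Dd \<sigma> p Y)))"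

definition dual_isotropic ::
  "(real^4 \<Rightarrow> real^4 \<Rightarrow> real) \<Rightarrow> (real^2) set \<Rightarrow> (real^2 \<Rightarrow> real^4) \<Rightarrow> (real^2 \<Rightarrow> real^4) \<Rightarrow> bool" where
  "dual_isotropic B U \<sigma> \<eta> \<longleftrightarrow>
     (\<forall>p\<in>U. B (\<eta> p) (\<sigma> p) = 1 \<and> B (\<eta> p) (\<eta> p) = 0 \<and> (\<forall>X. B (\<eta> p) (Dd \<sigma> p X) = 0))"

definition gradient :: "(real^2 \<Rightarrow> real^2 \<Rightarrow> real^2 \<Rightarrow> real) \<Rightarrow> (real^2 \<Rightarrow> real) \<Rightarrow> real^2 \<Rightarrow> real^2" where
  "gradient g f p = (THE X. \<forall>Y. g p X Y = Dd f p Y)"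

end

theory Submission imports Defs begin

lemma line_deriv:
  fixes F :: "'a::real_normed_vector \<Rightarrow> real"
  assumes "(F has_derivative F') (at (a + t *\<^sub>R v))"
  shows "((\<lambda>s. F (a + s *\<^sub>R v)) has_real_derivative F' v) (at t)"
proof -
  have l: "bounded_linear F'" using assms has_derivative_bounded_linear by blast
  have d: "((\<lambda>s. a + s *\<^sub>R v) has_derivative (\<lambda>s. s *\<^sub>R v)) (at t)"
    by (auto intro!: derivative_eq_intros)
  have "((\<lambda>s. F (a + s *\<^sub>R v)) has_derivative (\<lambda>s. F' (s *\<^sub>R v))) (at t)"
    using has_derivative_compose[OF d assms] by (simp add: o_def)
  moreover have "(\<lambda>s. F' (s *\<^sub>R v)) = (*) (F' v)"
    using linear_cmul[OF bounded_linear.linear[OF l]] by (auto simp: mult.commute)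
  ultimately show ?thesis by (simp add: has_field_derivative_def)
qed

lemma schwarz:
  fixes F :: "'a::real_normed_vector \<Rightarrow> real"
  assumes S: "open S" "x \<in> S"
    and F: "\<And>y. y \<in> S \<Longrightarrow> (F has_derivative f' y) (at y)"
    and Fv: "\<And>y. y \<in> S \<Longrightarrow> ((\<lambda>y. f' y v) has_derivative fv y) (at y)"
    and Fw: "\<And>y. y \<in> S \<Longrightarrow> ((\<lambda>y. f' y w) has_derivative fw y) (at y)"
    and cv: "continuous_on S (\<lambda>y. fv y w)" and cw: "continuous_on S (\<lambda>y. fw y v)"
  shows "fv x w = fw x v"
proof (rule ccontr)
  assume ne: "fv x w \<noteq> fw x v"
  define e where "e = \<bar>fv x w - fw x v\<bar> / 3"
  have e: "e > 0" using ne by (simp add: e_def)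
  obtain d1 where d1: "d1 > 0" "\<And>y. y \<in> S \<Longrightarrow> dist y x < d1 \<Longrightarrow> dist (fv y w) (fv x w) < e"
    using cv S(2) e unfolding continuous_on_iff by meson
  obtain d2 where d2: "d2 > 0" "\<And>y. y \<in> S \<Longrightarrow> dist y x < d2 \<Longrightarrow> dist (fw y v) (fw x v) < e"
    using cw S(2) e unfolding continuous_on_iff by meson
  obtain r where r: "r > 0" "ball x r \<subseteq> S" using S open_contains_ball by blast
  define d where "d = min (min d1 d2) r"
  have d: "d > 0" using d1 d2 r by (simp add: d_def)
  define h where "h = d / (2 * (norm v + norm w + 1))"
  have nn: "norm v + norm w + 1 > 0" by (smt (verit) norm_ge_zero)
  have h: "h > 0" using d nn unfolding h_def by (intro divide_pos_pos) auto
  define P where "P = (\<lambda>\<tau> \<sigma>. x + \<tau> *\<^sub>R v + \<sigma> *\<^sub>R w)"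
  have Pd: "dist (P \<tau> \<sigma>) x < d" if "0 \<le> \<tau>" "\<tau> \<le> h" "0 \<le> \<sigma>" "\<sigma> \<le> h" for \<tau> \<sigma>
  proof -
    have "dist (P \<tau> \<sigma>) x = norm (\<tau> *\<^sub>R v + \<sigma> *\<^sub>R w)" by (simp add: P_def dist_norm)
    also have "\<dots> \<le> \<tau> * norm v + \<sigma> * norm w"
      using norm_triangle_ineq[of "\<tau> *\<^sub>R v" "\<sigma> *\<^sub>R w"] that by simp
    also have "\<dots> \<le> h * norm v + h * norm w"
      using that by (intro add_mono mult_right_mono) auto
    also have "\<dots> < d"
    proof -
      have "h * (norm v + norm w + 1) = d / 2" using h_def nn by (simp add: field_simps)
      then show ?thesis using d h by (simp add: algebra_simps)
    qed
    finally show ?thesis .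
  qed
  have PS: "P \<tau> \<sigma> \<in> S" if "0 \<le> \<tau>" "\<tau> \<le> h" "0 \<le> \<sigma>" "\<sigma> \<le> h" for \<tau> \<sigma>
    using Pd[OF that] r(2) unfolding d_def by (auto simp: dist_commute)
  have Pv: "P \<tau> \<sigma> = (x + \<sigma> *\<^sub>R w) + \<tau> *\<^sub>R v" for \<tau> \<sigma> by (simp add: P_def algebra_simps)
  have Pw: "P \<tau> \<sigma> = (x + \<tau> *\<^sub>R v) + \<sigma> *\<^sub>R w" for \<tau> \<sigma> by (simp add: P_def algebra_simps)
  define G where "G = (\<lambda>\<tau>. F (P \<tau> h) - F (P \<tau> 0))"
  have "\<exists>z. 0 < z \<and> z < h \<and> G h - G 0 = (h - 0) * (f' (P z h) v - f' (P z 0) v)"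
  proof (rule MVT2[OF h])
    fix \<tau> assume a: "0 \<le> \<tau>" "\<tau> \<le> h"
    have 1: "((\<lambda>s. F ((x + h *\<^sub>R w) + s *\<^sub>R v)) has_real_derivative f' (P \<tau> h) v) (at \<tau>)"
      by (rule line_deriv) (metis F PS[OF a] h less_imp_le order_refl Pv)
    have 2: "((\<lambda>s. F ((x + 0 *\<^sub>R w) + s *\<^sub>R v)) has_real_derivative f' (P \<tau> 0) v) (at \<tau>)"
      by (rule line_deriv) (metis F PS[OF a] h less_imp_le order_refl Pv)
    show "(G has_real_derivative f' (P \<tau> h) v - f' (P \<tau> 0) v) (at \<tau>)"
      unfolding G_def using DERIV_diff[OF 1 2] by (simp add: Pv)
  qed
  then obtain t1 where t1: "0 < t1" "t1 < h" "G h - G 0 = h * (f' (P t1 h) v - f' (P t1 0) v)" by auto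
  have "\<exists>z. 0 < z \<and> z < h \<and> f' (P t1 h) v - f' (P t1 0) v = (h - 0) * fv (P t1 z) w"
  proof (rule MVT2[OF h])
    fix \<sigma> assume a: "0 \<le> \<sigma>" "\<sigma> \<le> h"
    have "((\<lambda>s. f' ((x + t1 *\<^sub>R v) + s *\<^sub>R w) v) has_real_derivative fv (P t1 \<sigma>) w) (at \<sigma>)"
      by (rule line_deriv) (metis Fv PS a t1(1,2) less_imp_le Pw)
    then show "((\<lambda>s. f' (P t1 s) v) has_real_derivative fv (P t1 \<sigma>) w) (at \<sigma>)" by (simp add: Pw)
  qed
  then obtain s1 where s1: "0 < s1" "s1 < h" "f' (P t1 h) v - f' (P t1 0) v = h * fv (P t1 s1) w" by auto
  define H where "H = (\<lambda>\<sigma>. F (P h \<sigma>) - F (P 0 \<sigma>))"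
  have "\<exists>z. 0 < z \<and> z < h \<and> H h - H 0 = (h - 0) * (f' (P h z) w - f' (P 0 z) w)"
  proof (rule MVT2[OF h])
    fix \<sigma> assume a: "0 \<le> \<sigma>" "\<sigma> \<le> h"
    have 1: "((\<lambda>s. F ((x + h *\<^sub>R v) + s *\<^sub>R w)) has_real_derivative f' (P h \<sigma>) w) (at \<sigma>)"
      by (rule line_deriv) (metis F PS[OF _ _ a] h less_imp_le order_refl Pw)
    have 2: "((\<lambda>s. F ((x + 0 *\<^sub>R v) + s *\<^sub>R w)) has_real_derivative f' (P 0 \<sigma>) w) (at \<sigma>)"
      by (rule line_deriv) (metis F PS[OF _ _ a] h less_imp_le order_refl Pw)
    show "(H has_real_derivative f' (P h \<sigma>) w - f' (P 0 \<sigma>) w) (at \<sigma>)"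
      unfolding H_def using DERIV_diff[OF 1 2] by (simp add: Pw)
  qed
  then obtain s2 where s2: "0 < s2" "s2 < h" "H h - H 0 = h * (f' (P h s2) w - f' (P 0 s2) w)" by auto
  have "\<exists>z. 0 < z \<and> z < h \<and> f' (P h s2) w - f' (P 0 s2) w = (h - 0) * fw (P z s2) v"
  proof (rule MVT2[OF h])
    fix \<tau> assume a: "0 \<le> \<tau>" "\<tau> \<le> h"
    have "((\<lambda>s. f' ((x + s2 *\<^sub>R w) + s *\<^sub>R v) w) has_real_derivative fw (P \<tau> s2) v) (at \<tau>)"
      by (rule line_deriv) (metis Fw PS a s2(1,2) less_imp_le Pv)
    then show "((\<lambda>s. f' (P s s2) w) has_real_derivative fw (P \<tau> s2) v) (at \<tau>)" by (simp add: Pv)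
  qed
  then obtain t2 where t2: "0 < t2" "t2 < h" "f' (P h s2) w - f' (P 0 s2) w = h * fw (P t2 s2) v" by auto
  have "G h - G 0 = H h - H 0" unfolding G_def H_def by simp
  then have "h * (h * fv (P t1 s1) w) = h * (h * fw (P t2 s2) v)"
    using t1 s1 s2 t2 by simp
  then have eq: "fv (P t1 s1) w = fw (P t2 s2) v" using h by simp
  have a1: "dist (fv (P t1 s1) w) (fv x w) < e"
  proof -
    have "P t1 s1 \<in> S" "dist (P t1 s1) x < d" using PS Pd t1 s1 by auto
    then show ?thesis using d1(2) unfolding d_def by auto
  qed
  have a2: "dist (fw (P t2 s2) v) (fw x v) < e"
  proof -
    have "P t2 s2 \<in> S" "dist (P t2 s2) x < d" using PS Pd t2 s2 by auto
    then show ?thesis using d2(2) unfolding d_def by auto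
  qed
  show False using a1 a2 eq e_def unfolding dist_real_def by (auto simp: abs_if split: if_splits)
qed


lemma comp_t:
  fixes G :: "real \<times> 'b::real_normed_vector \<Rightarrow> real"
  assumes "(G has_derivative G') (at (t, q))"
  shows "((\<lambda>s. G (s, q)) has_real_derivative G' (1, 0)) (at t)"
proof -
  have l: "bounded_linear G'" using assms has_derivative_bounded_linear by blast
  have d: "((\<lambda>s. (s, q)) has_derivative (\<lambda>s. (s, 0))) (at t)"
    by (auto intro!: derivative_eq_intros)
  have "((\<lambda>s. G (s, q)) has_derivative (\<lambda>s. G' (s, 0))) (at t)"
    using has_derivative_compose[OF d assms] by simp
  moreover have "(\<lambda>s. G' (s, 0)) = (*) (G' (1, 0))"
  proof
    fix s :: real
    have "G' (s, 0) = G' (s *\<^sub>R (1, 0))" by simp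
    also have "\<dots> = s * G' (1, 0)" using linear_cmul[OF bounded_linear.linear[OF l], of s "(1,0)"] by simp
    finally show "G' (s, 0) = G' (1, 0) * s" by simp
  qed
  ultimately show ?thesis by (simp add: has_field_derivative_def)
qed

lemma comp_q:
  fixes G :: "real \<times> 'b::real_normed_vector \<Rightarrow> real"
  assumes "(G has_derivative G') (at (t, q))"
  shows "((\<lambda>q. G (t, q)) has_derivative (\<lambda>e. G' (0, e))) (at q)"
proof -
  have d: "((\<lambda>q. (t, q)) has_derivative (\<lambda>e. (0, e))) (at q)"
    by (auto intro!: derivative_eq_intros)
  show ?thesis using has_derivative_compose[OF d assms] by simp
qed


lemma decomp4:
  fixes B :: "real^4 \<Rightarrow> real^4 \<Rightarrow> real"
  assumes Bbil: "bilinear B" and Bsym: "\<And>x y. B x y = B y x"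
    and f: "B s s = 0" "B s \<eta> = 1" "B s a = 0" "B s b = 0" "B \<eta> \<eta> = 0" "B \<eta> a = 0" "B \<eta> b = 0"
      "B a a = 1" "B a b = 0" "B b b = -1"
  shows "d = B d \<eta> *\<^sub>R s + B d s *\<^sub>R \<eta> + B d a *\<^sub>R a - B d b *\<^sub>R b"
proof -
  have Bl: "\<And>x y z. B (x + y) z = B x z + B y z" "\<And>x y z. B (x - y) z = B x z - B y z"
    "\<And>c x z. B (c *\<^sub>R x) z = c * B x z"
    "\<And>x y z. B z (x + y) = B z x + B z y" "\<And>x y z. B z (x - y) = B z x - B z y"
    "\<And>c x z. B z (c *\<^sub>R x) = c * B z x"
    "\<And>x. B 0 x = 0" "\<And>x. B x 0 = 0"
    using Bbil by (auto simp: bilinear_ladd bilinear_radd bilinear_lmul bilinear_rmul bilinear_lsub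
      bilinear_rsub bilinear_lzero bilinear_rzero)
  have f2: "B \<eta> s = 1" "B a s = 0" "B b s = 0" "B a \<eta> = 0" "B b \<eta> = 0" "B b a = 0"
    using f Bsym by metis+
  have dist: "s \<noteq> \<eta>" "s \<noteq> a" "s \<noteq> b" "\<eta> \<noteq> a" "\<eta> \<noteq> b" "a \<noteq> b"
    using f f2 by auto
  define S where "S = {s, \<eta>, a, b}"
  have fin: "finite S" unfolding S_def by simp
  have card: "card S = 4" unfolding S_def using dist by simp
  have ind: "independent S"
  proof
    assume "dependent S"
    then obtain k where k: "\<exists>v\<in>S. k v \<noteq> 0" "(\<Sum>v\<in>S. k v *\<^sub>R v) = 0"
      using dependent_finite[OF fin] by blast
    have sum: "k s *\<^sub>R s + k \<eta> *\<^sub>R \<eta> + k a *\<^sub>R a + k b *\<^sub>R b = 0"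
      using k(2) dist unfolding S_def by (simp add: add.assoc)
    have "B (k s *\<^sub>R s + k \<eta> *\<^sub>R \<eta> + k a *\<^sub>R a + k b *\<^sub>R b) s = 0"
      "B (k s *\<^sub>R s + k \<eta> *\<^sub>R \<eta> + k a *\<^sub>R a + k b *\<^sub>R b) \<eta> = 0"
      "B (k s *\<^sub>R s + k \<eta> *\<^sub>R \<eta> + k a *\<^sub>R a + k b *\<^sub>R b) a = 0"
      "B (k s *\<^sub>R s + k \<eta> *\<^sub>R \<eta> + k a *\<^sub>R a + k b *\<^sub>R b) b = 0"
      unfolding sum by (simp_all add: Bl)
    then have "k s = 0" "k \<eta> = 0" "k a = 0" "k b = 0" by (simp_all add: Bl f f2)
    then show False using k(1) unfolding S_def by auto
  qed
  have "(UNIV :: (real^4) set) \<subseteq> span S"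
    using card_eq_dim[of S UNIV] fin card ind by simp
  then have "d \<in> span S" by blast
  then obtain k1 k2 k3 k4 where d: "d = k1 *\<^sub>R s + k2 *\<^sub>R \<eta> + k3 *\<^sub>R a + k4 *\<^sub>R b"
    unfolding S_def span_breakdown_eq span_singleton
    by (auto simp: algebra_simps)
  show ?thesis
    by (subst (1) d) (simp add: d Bl f f2)
qed

lemma decomp2:
  fixes G :: "real^2 \<Rightarrow> real^2 \<Rightarrow> real"
  assumes Gbil: "bilinear G" and Gsym: "\<And>x y. G x y = G y x"
    and f: "G a a = 1" "G a b = 0" "G b b = -1"
  shows "d = G d a *\<^sub>R a - G d b *\<^sub>R b"
proof -
  have Bl: "\<And>x y z. G (x + y) z = G x z + G y z" "\<And>x y z. G (x - y) z = G x z - G y z"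
    "\<And>c x z. G (c *\<^sub>R x) z = c * G x z"
    "\<And>x y z. G z (x + y) = G z x + G z y" "\<And>x y z. G z (x - y) = G z x - G z y"
    "\<And>c x z. G z (c *\<^sub>R x) = c * G z x"
    "\<And>x. G 0 x = 0" "\<And>x. G x 0 = 0"
    using Gbil by (auto simp: bilinear_ladd bilinear_radd bilinear_lmul bilinear_rmul bilinear_lsub
      bilinear_rsub bilinear_lzero bilinear_rzero)
  have f2: "G b a = 0" using f Gsym by metis
  have dist: "a \<noteq> b" using f by auto
  define S where "S = {a, b}"
  have fin: "finite S" unfolding S_def by simp
  have card: "card S = 2" unfolding S_def using dist by simp
  have ind: "independent S"
  proof
    assume "dependent S"
    then obtain k where k: "\<exists>v\<in>S. k v \<noteq> 0" "(\<Sum>v\<in>S. k v *\<^sub>R v) = 0"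
      using dependent_finite[OF fin] by blast
    have sum: "k a *\<^sub>R a + k b *\<^sub>R b = 0"
      using k(2) dist unfolding S_def by simp
    have "G (k a *\<^sub>R a + k b *\<^sub>R b) a = 0"
      "G (k a *\<^sub>R a + k b *\<^sub>R b) b = 0"
      unfolding sum by (simp_all add: Bl)
    then have "k a = 0" "k b = 0" by (simp_all add: Bl f f2)
    then show False using k(1) unfolding S_def by auto
  qed
  have "(UNIV :: (real^2) set) \<subseteq> span S"
    using card_eq_dim[of S UNIV] fin card ind by simp
  then have "d \<in> span S" by blast
  then obtain k1 k2 where d: "d = k1 *\<^sub>R a + k2 *\<^sub>R b"
    unfolding S_def span_breakdown_eq span_singleton
    by (auto simp: algebra_simps)
  show ?thesis
    by (subst (1) d) (simp add: d Bl f f2)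
qed

lemma der1:
  fixes u :: "real \<Rightarrow> real"
  assumes ud: "(u has_real_derivative w) (at 0)" and u0: "u 0 = 0"
  shows "((\<lambda>t. exp (- u t)) has_real_derivative - w) (at 0)"
  by (rule derivative_eq_intros ud | simp add: u0)+

lemma der4:
  fixes u :: "real \<Rightarrow> real"
  assumes ud: "(u has_real_derivative w) (at 0)" and u0: "u 0 = 0"
  shows "((\<lambda>t. exp (u t)) has_real_derivative w) (at 0)"
  by (rule derivative_eq_intros ud | simp add: u0)+

lemma der2:
  fixes c b :: "real \<Rightarrow> real"
  assumes "(c has_real_derivative A) (at 0)" "(b has_real_derivative B) (at 0)" "c 0 = 0" "b 0 = 1"
  shows "((\<lambda>t. - c t * b t) has_real_derivative - A) (at 0)"
  by (rule derivative_eq_intros assms | simp add: assms)+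

lemma der3:
  fixes c b d:: "real \<Rightarrow> real"
  assumes "(c has_real_derivative A) (at 0)" "(b has_real_derivative B) (at 0)" "(d has_real_derivative D) (at 0)" "c 0 = 0" "b 0 = 1" "d 0 = 0"
  shows "((\<lambda>t. (d t ^ 2 - c t ^ 2) / (2 * b t)) has_real_derivative 0) (at 0)"
  by (rule derivative_eq_intros assms | simp add: assms)+

theorem mainTheorem18:
  fixes B :: "real^4 \<Rightarrow> real^4 \<Rightarrow> real"
    and U :: "(real^2) set" and T :: "real set"
    and g :: "real^2 \<Rightarrow> real^2 \<Rightarrow> real^2 \<Rightarrow> real"
    and u :: "real \<Rightarrow> real^2 \<Rightarrow> real"
    and \<sigma>t \<eta>t :: "real \<Rightarrow> real^2 \<Rightarrow> real^4"
    and udot :: "real^2 \<Rightarrow> real"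
  assumes B: "signature_22 B"
    and U: "open U" and T: "open T" "0 \<in> T"
    and imm: "isotropic_lift_of_immersion B U (\<sigma>t 0)"
    and g: "lorentz_metric U g"
    and u_smooth: "smooth_on (T \<times> U) (\<lambda>(t, p). u t p)"
    and u0: "\<forall>p\<in>U. u 0 p = 0"
    and udot: "udot = (\<lambda>p. deriv (\<lambda>t. u t p) 0)"
    and \<sigma>t: "\<forall>t\<in>T. isotropic_surface_of B U (\<lambda>p X Y. exp (2 * u t p) * g p X Y) (\<sigma>t t)"
    and \<sigma>t_eq: "\<forall>t\<in>T. \<forall>p\<in>U. \<sigma>t t p = exp (u t p) *\<^sub>R \<sigma>t 0 p"
    and \<eta>t: "\<forall>t\<in>T. dual_isotropic B U (\<sigma>t t) (\<eta>t t)"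
  shows "\<forall>p\<in>U.
     ((\<lambda>t. \<sigma>t t p) has_vector_derivative (udot p *\<^sub>R \<sigma>t 0 p)) (at 0) \<and>
     ((\<lambda>t. \<eta>t t p) has_vector_derivative
        (- (udot p *\<^sub>R \<eta>t 0 p) - Dd (\<sigma>t 0) p (gradient g udot p))) (at 0)"
proof (intro ballI)
  fix p assume pU: "p \<in> U"
  have TU: "open (T \<times> U)" using T U by (simp add: open_Times)
  have p0: "(0, p) \<in> T \<times> U" using T pU by simp
  have Bbil: "bilinear B" and Bsym: "\<And>x y. B x y = B y x" using B unfolding signature_22_def by auto
  have Bl: "\<And>x y z. B (x + y) z = B x z + B y z" "\<And>x y z. B (x - y) z = B x z - B y z"
    "\<And>c x z. B (c *\<^sub>R x) z = c * B x z"
    "\<And>x y z. B z (x + y) = B z x + B z y" "\<And>x y z. B z (x - y) = B z x - B z y"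
    "\<And>c x z. B z (c *\<^sub>R x) = c * B z x"
    "\<And>x. B 0 x = 0" "\<And>x. B x 0 = 0" "\<And>x z. B (- x) z = - B x z" "\<And>x z. B z (- x) = - B z x"
    using Bbil by (auto simp: bilinear_ladd bilinear_radd bilinear_lmul bilinear_rmul bilinear_lsub
      bilinear_rsub bilinear_lzero bilinear_rzero bilinear_lneg bilinear_rneg)
  have s2: "smooth_k (Suc (Suc 0)) (T \<times> U) (\<lambda>(t, p). u t p)"
    using u_smooth unfolding smooth_on_def by blast
  then obtain f' where f'1: "\<forall>x\<in>T \<times> U. ((\<lambda>(t, p). u t p) has_derivative f' x) (at x)"
    and f'2: "\<forall>v. smooth_k (Suc 0) (T \<times> U) (\<lambda>x. f' x v)" by auto
  have "\<forall>v. \<exists>fv. (\<forall>x\<in>T \<times> U. ((\<lambda>x. f' x v) has_derivative fv x) (at x)) \<and>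
     (\<forall>w. continuous_on (T \<times> U) (\<lambda>x. fv x w))" using f'2 by simp
  then obtain f2 where f2d: "\<And>v x. x \<in> T \<times> U \<Longrightarrow> ((\<lambda>x. f' x v) has_derivative f2 v x) (at x)"
    and f2c: "\<And>v w. continuous_on (T \<times> U) (\<lambda>x. f2 v x w)" by metis
  have sym: "f2 v x w = f2 w x v" if "x \<in> T \<times> U" for v w x
    by (rule schwarz[OF TU that, of "\<lambda>(t, p). u t p" f']) (use f'1 f2d f2c in auto)
  have du_q: "((\<lambda>q. u t q) has_derivative (\<lambda>e. f' (t, q) (0, e))) (at q)" if "t \<in> T" "q \<in> U" for t q
    using comp_q[OF f'1[rule_format, of "(t, q)"]] that by simp
  have du_t: "((\<lambda>t. u t q) has_real_derivative f' (t, q) (1, 0)) (at t)" if "t \<in> T" "q \<in> U" for t q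
    using comp_t[OF f'1[rule_format, of "(t, q)"]] that by simp
  have udot_eq: "udot q = f' (0, q) (1, 0)" if "q \<in> U" for q
    unfolding udot using DERIV_imp_deriv[OF du_t[OF T(2) that]] .
  define A where "A = (\<lambda>e. f2 (1, 0) (0, p) (0, e))"
  have "((\<lambda>q. f' (0, q) (1, 0)) has_derivative A) (at p)"
    unfolding A_def by (rule comp_q[OF f2d[OF p0]])
  then have "(udot has_derivative A) (at p)"
    by (rule has_derivative_transform_within_open[OF _ U pU]) (simp add: udot_eq)
  then have Ddu: "Dd udot p = A" and Alin: "linear A"
    using frechet_derivative_at has_derivative_bounded_linear bounded_linear.linear
    unfolding Dd_def by blast+
  define c where "c = (\<lambda>t e. f' (t, p) (0, e))"
  have cd: "((\<lambda>t. c t e) has_real_derivative A e) (at 0)" for e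
  proof -
    have "((\<lambda>t. c t e) has_real_derivative f2 (0, e) (0, p) (1, 0)) (at 0)"
      unfolding c_def by (rule comp_t[OF f2d[OF p0]])
    then show ?thesis using sym[OF p0, of "(0, e)" "(1, 0)"] by (simp add: A_def)
  qed
  have c0: "c 0 e = 0" for e
  proof -
    have "((\<lambda>q. 0) has_derivative (\<lambda>e. f' (0, p) (0, e))) (at p)"
      by (rule has_derivative_transform_within_open[OF du_q[OF T(2) pU] U pU]) (simp add: u0)
    then have "(\<lambda>e. f' (0, p) (0, e)) = (\<lambda>e. 0)"
      using has_derivative_unique has_derivative_const by blast
    then show ?thesis unfolding c_def by metis
  qed
  define \<sigma>0 where "\<sigma>0 = \<sigma>t 0"
  have \<sigma>eq: "\<And>t q. t \<in> T \<Longrightarrow> q \<in> U \<Longrightarrow> \<sigma>t t q = exp (u t q) *\<^sub>R \<sigma>0 q"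
    using \<sigma>t_eq unfolding \<sigma>0_def by blast
  have "smooth_k (Suc 0) U \<sigma>0" using imm unfolding isotropic_lift_of_immersion_def smooth_on_def \<sigma>0_def by blast
  then obtain \<sigma>' where \<sigma>'d: "\<forall>x\<in>U. (\<sigma>0 has_derivative \<sigma>' x) (at x)" by auto
  define L where "L = \<sigma>' p"
  have Ld: "(\<sigma>0 has_derivative L) (at p)" using \<sigma>'d pU L_def by blast
  then have DdL: "Dd \<sigma>0 p = L" and Llin: "linear L"
    using frechet_derivative_at has_derivative_bounded_linear bounded_linear.linear
    unfolding Dd_def by blast+
  have isoU: "\<And>q. q \<in> U \<Longrightarrow> B (\<sigma>0 q) (\<sigma>0 q) = 0" using imm unfolding isotropic_lift_of_immersion_def \<sigma>0_def by blast
  have bb: "bounded_bilinear B" using Bbil bilinear_conv_bounded_bilinear by blast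
  have \<sigma>L: "B (\<sigma>0 p) (L X) = 0" for X
  proof -
    have "((\<lambda>q. B (\<sigma>0 q) (\<sigma>0 q)) has_derivative (\<lambda>h. B (\<sigma>0 p) (L h) + B (L h) (\<sigma>0 p))) (at p)"
      by (rule bounded_bilinear.FDERIV[OF bb Ld Ld])
    then have "((\<lambda>q. 0) has_derivative (\<lambda>h. B (\<sigma>0 p) (L h) + B (L h) (\<sigma>0 p))) (at p)"
      by (rule has_derivative_transform_within_open[OF _ U pU]) (simp add: isoU)
    then have "(\<lambda>h. B (\<sigma>0 p) (L h) + B (L h) (\<sigma>0 p)) = (\<lambda>h. 0)"
      using has_derivative_unique has_derivative_const by blast
    then have "B (\<sigma>0 p) (L X) + B (L X) (\<sigma>0 p) = 0" by metis
    then show ?thesis using Bsym[of "L X" "\<sigma>0 p"] by simp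
  qed
  have gL: "g p X Y = B (L X) (L Y)" for X Y
    using \<sigma>t T(2) pU u0 DdL unfolding isotropic_surface_of_def \<sigma>0_def by auto
  have lf: "lorentz_form (g p)" using g pU unfolding lorentz_metric_def by blast
  then obtain e1 e2 where e: "g p e1 e1 = 1" "g p e2 e2 = -1" "g p e1 e2 = 0"
    and gbil: "bilinear (g p)" and gsym: "\<And>x y. g p x y = g p y x"
    unfolding lorentz_form_def by blast
  have Gl: "\<And>x y z. g p (x + y) z = g p x z + g p y z" "\<And>x y z. g p (x - y) z = g p x z - g p y z"
    "\<And>c x z. g p (c *\<^sub>R x) z = c * g p x z"
    "\<And>x y z. g p z (x + y) = g p z x + g p z y" "\<And>x y z. g p z (x - y) = g p z x - g p z y"
    "\<And>c x z. g p z (c *\<^sub>R x) = c * g p z x"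
    using gbil by (auto simp: bilinear_ladd bilinear_radd bilinear_lmul bilinear_rmul bilinear_lsub
      bilinear_rsub)
  define a where "a = L e1"
  define b where "b = L e2"
  define sp where "sp = \<sigma>0 p"
  define \<eta>0 where "\<eta>0 = \<eta>t 0 p"
  have ab: "B a a = 1" "B b b = -1" "B a b = 0" "B b a = 0"
    using e gL Bsym unfolding a_def b_def by metis+
  have spf: "B sp sp = 0" "B sp a = 0" "B sp b = 0" "B a sp = 0" "B b sp = 0"
    using isoU[OF pU] \<sigma>L Bsym unfolding sp_def a_def b_def by metis+
  have \<eta>0f: "B \<eta>0 sp = 1" "B \<eta>0 \<eta>0 = 0" "B \<eta>0 (L X) = 0" for X
    using \<eta>t T(2) pU DdL unfolding dual_isotropic_def \<eta>0_def sp_def \<sigma>0_def by auto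
  have \<eta>0f2: "B sp \<eta>0 = 1" "B \<eta>0 a = 0" "B \<eta>0 b = 0" "B a \<eta>0 = 0" "B b \<eta>0 = 0"
    using \<eta>0f Bsym unfolding a_def b_def by metis+
  have dec: "d = B d \<eta>0 *\<^sub>R sp + B d sp *\<^sub>R \<eta>0 + B d a *\<^sub>R a - B d b *\<^sub>R b" for d
    by (rule decomp4[OF Bbil Bsym]) (use ab spf \<eta>0f \<eta>0f2 in auto)
  have dec2: "Y = g p Y e1 *\<^sub>R e1 - g p Y e2 *\<^sub>R e2" for Y
    by (rule decomp2[OF gbil gsym e(1,3,2)])
  define X0 where "X0 = A e1 *\<^sub>R e1 - A e2 *\<^sub>R e2"
  have grad: "gradient g udot p = X0"
    unfolding gradient_def Ddu
  proof (rule the_equality)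
    show "\<forall>Y. g p X0 Y = A Y"
    proof
      fix Y
      have "A Y = A (g p Y e1 *\<^sub>R e1 - g p Y e2 *\<^sub>R e2)" using dec2[of Y] by simp
      also have "\<dots> = g p Y e1 * A e1 - g p Y e2 * A e2"
        using Alin by (simp add: linear_diff linear_cmul)
      finally show "g p X0 Y = A Y" unfolding X0_def by (simp add: Gl gsym[of Y])
    qed
  next
    fix X assume "\<forall>Y. g p X Y = A Y"
    then show "X = X0" unfolding X0_def using dec2[of X] gsym by metis
  qed
  have LX0: "L X0 = A e1 *\<^sub>R a - A e2 *\<^sub>R b"
    unfolding X0_def a_def b_def using Llin by (simp add: linear_diff linear_cmul)
  define \<beta> where "\<beta> = (\<lambda>t. exp (- u t p))"
  define \<gamma> where "\<gamma> = (\<lambda>t. - c t e1 * \<beta> t)"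
  define \<delta> where "\<delta> = (\<lambda>t. - c t e2 * \<beta> t)"
  define \<alpha> where "\<alpha> = (\<lambda>t. (\<delta> t ^ 2 - \<gamma> t ^ 2) / (2 * \<beta> t))"
  define \<Phi> where "\<Phi> = (\<lambda>t. \<alpha> t *\<^sub>R sp + \<beta> t *\<^sub>R \<eta>0 + \<gamma> t *\<^sub>R a - \<delta> t *\<^sub>R b)"
  have \<eta>\<Phi>: "\<eta>t t p = \<Phi> t" if tT: "t \<in> T" for t
  proof -
    define E where "E = \<eta>t t p"
    have ed: "((\<lambda>q. exp (u t q)) has_derivative (\<lambda>X. exp (u t p) * c t X)) (at p)"
      using has_derivative_exp[OF du_q[OF tT pU]] unfolding c_def by (simp add: mult.commute)
    have "((\<lambda>q. exp (u t q) *\<^sub>R \<sigma>0 q) has_derivative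
        (\<lambda>X. exp (u t p) *\<^sub>R L X + (exp (u t p) * c t X) *\<^sub>R \<sigma>0 p)) (at p)"
      using has_derivative_scaleR[OF ed Ld] .
    then have "(\<sigma>t t has_derivative
        (\<lambda>X. exp (u t p) *\<^sub>R L X + (exp (u t p) * c t X) *\<^sub>R \<sigma>0 p)) (at p)"
      by (rule has_derivative_transform_within_open[OF _ U pU]) (simp add: \<sigma>eq tT)
    then have Dt0: "Dd (\<sigma>t t) p = (\<lambda>X. exp (u t p) *\<^sub>R L X + (exp (u t p) * c t X) *\<^sub>R \<sigma>0 p)"
      unfolding Dd_def by (rule frechet_derivative_at[symmetric])
    have Dt: "Dd (\<sigma>t t) p X = exp (u t p) *\<^sub>R L X + (exp (u t p) * c t X) *\<^sub>R sp" for X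
      by (simp add: Dt0 sp_def)
    have du: "B E (\<sigma>t t p) = 1" "B E E = 0" "B E (Dd (\<sigma>t t) p X) = 0" for X
      using \<eta>t tT pU unfolding dual_isotropic_def E_def by auto
    have "B E (\<sigma>t t p) = exp (u t p) * B E sp" using \<sigma>eq[OF tT pU] by (simp add: sp_def Bl)
    then have Esp: "B E sp = \<beta> t" using du(1) unfolding \<beta>_def
      by (simp add: exp_minus field_simps)
    have EL: "B E (L X) = - c t X * \<beta> t" for X
    proof -
      have "exp (u t p) * (B E (L X) + c t X * B E sp) = 0" using du(3)[of X] unfolding Dt
        by (simp add: Bl algebra_simps)
      then have "B E (L X) + c t X * B E sp = 0" by simp
      then have "B E (L X) = - (c t X * B E sp)" by (simp add: eq_neg_iff_add_eq_0)
      then show ?thesis using Esp by simp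
    qed
    have Ea: "B E a = \<gamma> t" and Eb: "B E b = \<delta> t" using EL unfolding a_def b_def \<gamma>_def \<delta>_def by auto
    have Edec: "E = B E \<eta>0 *\<^sub>R sp + \<beta> t *\<^sub>R \<eta>0 + \<gamma> t *\<^sub>R a - \<delta> t *\<^sub>R b"
      using dec[of E] unfolding Esp Ea Eb .
    have "0 = B E (B E \<eta>0 *\<^sub>R sp + \<beta> t *\<^sub>R \<eta>0 + \<gamma> t *\<^sub>R a - \<delta> t *\<^sub>R b)"
      using du(2) arg_cong[OF Edec, of "B E"] by simp
    also have "\<dots> = 2 * \<beta> t * B E \<eta>0 + \<gamma> t ^ 2 - \<delta> t ^ 2"
      by (simp add: Bl Esp Ea Eb power2_eq_square)
    finally have h\<alpha>: "B E \<eta>0 = \<alpha> t" unfolding \<alpha>_def \<beta>_def by (simp add: field_simps)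
    have "E = \<Phi> t" using Edec unfolding h\<alpha> \<Phi>_def .
    then show ?thesis unfolding E_def .
  qed
  have u0p: "u 0 p = 0" using u0 pU by simp
  have ud: "((\<lambda>t. u t p) has_real_derivative udot p) (at 0)"
    using du_t[OF T(2) pU] udot_eq[OF pU] by simp
  have \<beta>0: "\<beta> 0 = 1" unfolding \<beta>_def by (simp add: u0p)
  have \<beta>d: "(\<beta> has_real_derivative - udot p) (at 0)"
    unfolding \<beta>_def by (rule der1[OF ud u0p])
  have \<gamma>d: "(\<gamma> has_real_derivative - A e1) (at 0)"
    unfolding \<gamma>_def by (rule der2[OF cd[of e1] \<beta>d c0 \<beta>0])
  have \<delta>d: "(\<delta> has_real_derivative - A e2) (at 0)"
    unfolding \<delta>_def by (rule der2[OF cd[of e2] \<beta>d c0 \<beta>0])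
  have \<gamma>0: "\<gamma> 0 = 0" and \<delta>0: "\<delta> 0 = 0" unfolding \<gamma>_def \<delta>_def by (simp_all add: c0)
  have \<alpha>d: "(\<alpha> has_real_derivative 0) (at 0)"
    unfolding \<alpha>_def by (rule der3[OF \<gamma>d \<beta>d \<delta>d \<gamma>0 \<beta>0 \<delta>0])
  have vs: "((\<lambda>t. f t *\<^sub>R v) has_vector_derivative f' *\<^sub>R v) (at 0)"
    if "(f has_real_derivative f') (at 0)" for f f' and v :: "real^4"
    using has_vector_derivative_scaleR[OF that has_vector_derivative_const[of v]] by simp
  have \<Phi>d: "(\<Phi> has_vector_derivative (- (udot p *\<^sub>R \<eta>0) - L X0)) (at 0)"
  proof -
    have "(\<Phi> has_vector_derivative (0 *\<^sub>R sp + (- udot p) *\<^sub>R \<eta>0 + (- A e1) *\<^sub>R a - (- A e2) *\<^sub>R b)) (at 0)"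
      unfolding \<Phi>_def
      by (intro has_vector_derivative_add has_vector_derivative_diff vs \<alpha>d \<beta>d \<gamma>d \<delta>d)
    then show ?thesis unfolding LX0 by (simp add: algebra_simps)
  qed
  have part2: "((\<lambda>t. \<eta>t t p) has_vector_derivative
        (- (udot p *\<^sub>R \<eta>t 0 p) - Dd (\<sigma>t 0) p (gradient g udot p))) (at 0)"
    unfolding grad DdL[unfolded \<sigma>0_def] \<eta>0_def[symmetric]
    by (rule has_vector_derivative_transform_within_open[OF \<Phi>d T]) (simp add: \<eta>\<Phi>)
  have ed: "((\<lambda>t. exp (u t p)) has_real_derivative udot p) (at 0)"
    by (rule der4[OF ud u0p])
  have part1: "((\<lambda>t. \<sigma>t t p) has_vector_derivative (udot p *\<^sub>R \<sigma>t 0 p)) (at 0)"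
    by (rule has_vector_derivative_transform_within_open[OF vs[OF ed] T]) (metis \<sigma>t_eq pU)
  show "((\<lambda>t. \<sigma>t t p) has_vector_derivative (udot p *\<^sub>R \<sigma>t 0 p)) (at 0) \<and>
     ((\<lambda>t. \<eta>t t p) has_vector_derivative
        (- (udot p *\<^sub>R \<eta>t 0 p) - Dd (\<sigma>t 0) p (gradient g udot p))) (at 0)"
    using part1 part2 by blast
qed

end
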